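(* Let $\beta\ge0$ and $n>0$ be integers. Then $$C_\beta(n)=\sum_{\substack{d\mid (n+\beta)\\ \beta d<n+\beta}} E(d),$$ where $d$ ranges over positive divisors of $n+\beta$.
   Context: Define on triples of integers $\Gamma_{\beta,1}(\tau_1,\tau_2,\tau_3)=(\tau_2,\tau_3,\tau_2+\tau_3+\beta)$ and $\Gamma_{\beta,2}(\tau_1,\tau_2,\tau_3)=(\tau_1,\tau_3,\tau_1+\tau_3+\beta)$. For integers $\alpha\ge1$, $\beta\ge0$, the $(\alpha,\beta)$-Euclid tree is the set of triples obtained from the root $(\alpha,\alpha,2\alpha+\beta)$ by finitely many (possibly zero) applications of $\Gamma_{\beta,1},\Gamma_{\beta,2}$; $\max T$ is the largest entry of $T$. Define $C_\beta(n)=\#\{T: T\text{ is on the }(\alpha,\beta)\text{-Euclid tree for some integer }\alpha\ge1,\ \max T=n\}+1$ (distinct triples counted). Define $E(1)=1$ and, for $n\ge2$, $E(n)=\#\{T: T\text{ is on the }(1,0)\text{-Euclid tree},\ \max T=n\}$. *)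

theory Defs
  imports Main
begin

type_synonym triple = "int \<times> int \<times> int"

definition Gamma1 :: "int \<Rightarrow> triple \<Rightarrow> triple" where
  "Gamma1 \<beta> T = (case T of (t1, t2, t3) \<Rightarrow> (t2, t3, t2 + t3 + \<beta>))"

definition Gamma2 :: "int \<Rightarrow> triple \<Rightarrow> triple" where
  "Gamma2 \<beta> T = (case T of (t1, t2, t3) \<Rightarrow> (t1, t3, t1 + t3 + \<beta>))"

inductive_set euclid_tree :: "int \<Rightarrow> int \<Rightarrow> triple set" for \<alpha> \<beta> where
  root: "(\<alpha>, \<alpha>, 2 * \<alpha> + \<beta>) \<in> euclid_tree \<alpha> \<beta>"
| step1: "T \<in> euclid_tree \<alpha> \<beta> \<Longrightarrow> Gamma1 \<beta> T \<in> euclid_tree \<alpha> \<beta>"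
| step2: "T \<in> euclid_tree \<alpha> \<beta> \<Longrightarrow> Gamma2 \<beta> T \<in> euclid_tree \<alpha> \<beta>"

definition maxT :: "triple \<Rightarrow> int" where
  "maxT T = (case T of (a, b, c) \<Rightarrow> max a (max b c))"

definition C :: "nat \<Rightarrow> nat \<Rightarrow> nat" where
  "C \<beta> n = card {T. \<exists>\<alpha>::int. \<alpha> \<ge> 1 \<and> T \<in> euclid_tree \<alpha> (int \<beta>) \<and> maxT T = int n} + 1"

definition E :: "nat \<Rightarrow> nat" where
  "E n = (if n = 1 then 1 else card {T. T \<in> euclid_tree 1 0 \<and> maxT T = int n})"

end

theory Submission imports Defs begin

lemma cop_add1: "coprime (a::int) b \<Longrightarrow> coprime b (a + b)"
  by (metis add.commute gcd_add2 gcd.commute coprime_iff_gcd_eq_1)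
lemma cop_add2: "coprime (a::int) b \<Longrightarrow> coprime a (a + b)"
  by (metis gcd_add2 coprime_iff_gcd_eq_1)

lemma tree_sub:
  "T \<in> euclid_tree \<alpha> \<beta> \<Longrightarrow> \<exists>a b. T = ((\<alpha>+\<beta>)*a - \<beta>, (\<alpha>+\<beta>)*b - \<beta>, (\<alpha>+\<beta>)*(a+b) - \<beta>) \<and> 0<a \<and> a\<le>b \<and> coprime a b"
proof (induction rule: euclid_tree.induct)
  case root
  show ?case by (rule exI[of _ 1], rule exI[of _ 1]) (simp add: algebra_simps)
next
  case (step1 T)
  then obtain a b where h: "T = ((\<alpha>+\<beta>)*a - \<beta>, (\<alpha>+\<beta>)*b - \<beta>, (\<alpha>+\<beta>)*(a+b) - \<beta>)" "0<a" "a\<le>b" "coprime a b" by blast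
  show ?case
    by (rule exI[of _ b], rule exI[of _ "a+b"]) (use h cop_add1 in \<open>auto simp: Gamma1_def algebra_simps\<close>)
next
  case (step2 T)
  then obtain a b where h: "T = ((\<alpha>+\<beta>)*a - \<beta>, (\<alpha>+\<beta>)*b - \<beta>, (\<alpha>+\<beta>)*(a+b) - \<beta>)" "0<a" "a\<le>b" "coprime a b" by blast
  show ?case
    by (rule exI[of _ a], rule exI[of _ "a+b"]) (use h cop_add2 in \<open>auto simp: Gamma2_def algebra_simps\<close>)
qed

lemma tree_sup:
  "0<a \<Longrightarrow> a\<le>b \<Longrightarrow> coprime a b \<Longrightarrow> (k*a - \<beta>, k*b - \<beta>, k*(a+b) - \<beta>) \<in> euclid_tree (k-\<beta>) \<beta>"
proof (induction "nat b" arbitrary: a b rule: less_induct)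
  case less
  show ?case
  proof (cases "a = b")
    case True
    then have "is_unit a" using less.prems coprime_self by metis
    then have "a = 1" using less.prems by (simp add: zdvd1_eq)
    then have eq: "(k*a - \<beta>, k*b - \<beta>, k*(a+b) - \<beta>) = (k-\<beta>, k-\<beta>, 2*(k-\<beta>)+\<beta>)"
      using True by (simp add: algebra_simps)
    show ?thesis unfolding eq by (rule euclid_tree.root)
  next
    case False
    define c where "c = b - a"
    have cp: "coprime a c" using less.prems unfolding c_def
      using gcd_add2[of a "b-a"] by (simp add: coprime_iff_gcd_eq_1)
    show ?thesis
    proof (cases "c \<le> a")
      case True
      have "(k*c - \<beta>, k*a - \<beta>, k*(c+a) - \<beta>) \<in> euclid_tree (k-\<beta>) \<beta>"
        using less.hyps[of a c] less.prems False True cp unfolding c_def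
        by (auto simp: coprime_commute)
      from euclid_tree.step1[OF this] show ?thesis
        by (simp add: Gamma1_def c_def algebra_simps)
    next
      case F2: False
      have "(k*a - \<beta>, k*c - \<beta>, k*(a+c) - \<beta>) \<in> euclid_tree (k-\<beta>) \<beta>"
        using less.hyps[of c a] less.prems False F2 cp unfolding c_def
        by auto
      from euclid_tree.step2[OF this] show ?thesis
        by (simp add: Gamma2_def c_def algebra_simps)
    qed
  qed
qed
lemma maxT_val: "0<k \<Longrightarrow> 0<a \<Longrightarrow> a\<le>b \<Longrightarrow> maxT (k*a-\<beta>, k*b-\<beta>, k*(a+b)-\<beta>) = k*(a+b)-(\<beta>::int)"
proof -
  assume h: "0<k" "0<a" "a\<le>b"
  have "k*a \<le> k*b" using h by (simp add: mult_left_mono)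
  moreover have "k*b \<le> k*(a+b)" using h by (simp add: mult_left_mono)
  ultimately show ?thesis by (simp add: maxT_def)
qed

definition A :: "nat \<Rightarrow> triple set" where
  "A d = {T. T \<in> euclid_tree 1 0 \<and> maxT T = int d}"

lemma A_char: "T \<in> A d \<longleftrightarrow> (\<exists>a b. T = (a,b,a+b) \<and> 0<a \<and> a\<le>b \<and> coprime a b \<and> a+b = int d)"
proof
  assume "T \<in> A d"
  then have t: "T \<in> euclid_tree 1 0" "maxT T = int d" by (auto simp: A_def)
  from tree_sub[OF t(1)] obtain a b where h: "T = (a,b,a+b)" "0<a" "a\<le>b" "coprime a b" by auto
  then show "\<exists>a b. T = (a,b,a+b) \<and> 0<a \<and> a\<le>b \<and> coprime a b \<and> a+b = int d"
    using t(2) maxT_val[of 1 a b 0] by auto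
next
  assume "\<exists>a b. T = (a,b,a+b) \<and> 0<a \<and> a\<le>b \<and> coprime a b \<and> a+b = int d"
  then obtain a b where h: "T = (a,b,a+b)" "0<a" "a\<le>b" "coprime a b" "a+b = int d" by blast
  have "T \<in> euclid_tree 1 0" using tree_sup[OF h(2-4), of 1 0] h(1) by simp
  then show "T \<in> A d" using h maxT_val[of 1 a b 0] by (simp add: A_def)
qed

lemma A_finite: "finite (A d)"
proof -
  have "A d \<subseteq> {0..int d} \<times> {0..int d} \<times> {0..int d}"
    by (auto simp: A_char)
  then show ?thesis by (rule finite_subset) auto
qed

lemma A_one: "A 1 = {}"
  by (auto simp: A_char)

lemma E_A: "d \<noteq> 1 \<Longrightarrow> E d = card (A d)"
  by (simp add: E_def A_def)

definition K :: "nat \<Rightarrow> nat \<Rightarrow> nat \<Rightarrow> int" where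
  "K n \<beta> d = int ((n + \<beta>) div d)"

definition g :: "nat \<Rightarrow> nat \<Rightarrow> nat \<Rightarrow> triple \<Rightarrow> triple" where
  "g n \<beta> d T = (case T of (x,y,z) \<Rightarrow> (K n \<beta> d*x - int \<beta>, K n \<beta> d*y - int \<beta>, K n \<beta> d*z - int \<beta>))"

lemma S_eq:
  assumes "n > 0"
  shows "{T. \<exists>\<alpha>::int. \<alpha> \<ge> 1 \<and> T \<in> euclid_tree \<alpha> (int \<beta>) \<and> maxT T = int n}
    = (\<Union>d\<in>{d. d > 0 \<and> d dvd (n + \<beta>) \<and> \<beta> * d < n + \<beta>}. g n \<beta> d ` A d)"
proof (intro equalityI subsetI)
  fix T assume "T \<in> {T. \<exists>\<alpha>::int. \<alpha> \<ge> 1 \<and> T \<in> euclid_tree \<alpha> (int \<beta>) \<and> maxT T = int n}"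
  then obtain \<alpha> where al: "\<alpha> \<ge> 1" "T \<in> euclid_tree \<alpha> (int \<beta>)" "maxT T = int n" by blast
  from tree_sub[OF al(2)] obtain a b where h: "T = ((\<alpha>+int \<beta>)*a - int \<beta>, (\<alpha>+int \<beta>)*b - int \<beta>, (\<alpha>+int \<beta>)*(a+b) - int \<beta>)"
     "0<a" "a\<le>b" "coprime a b" by blast
  define k where "k = \<alpha> + int \<beta>"
  have kpos: "k > int \<beta>" using al(1) by (simp add: k_def)
  have mx: "k*(a+b) - int \<beta> = int n" using al(3) h maxT_val[of k a b "int \<beta>"] kpos unfolding k_def by simp
  define d where "d = nat (a+b)"
  define kn where "kn = nat k"
  have dI: "int d = a+b" using h by (simp add: d_def)
  have knI: "int kn = k" using kpos by (simp add: kn_def)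
  have prod: "kn * d = n + \<beta>" using mx dI knI by (metis (mono_tags, opaque_lifting) of_nat_add of_nat_mult add_diff_cancel_right' diff_add_cancel of_nat_eq_iff mult.commute)
  have dpos: "d > 0" using h by (simp add: d_def)
  have kd: "(n+\<beta>) div d = kn" using prod dpos by (metis nonzero_mult_div_cancel_right not_gr0)
  have bk: "\<beta> < kn" using kpos knI by linarith
  have "\<beta> * d < kn * d" using bk dpos by simp
  moreover have "d dvd (n+\<beta>)" using prod by (metis dvd_triv_right)
  ultimately have dD: "d \<in> {d. d > 0 \<and> d dvd (n + \<beta>) \<and> \<beta> * d < n + \<beta>}"
    using dpos prod by auto
  have "(a,b,a+b) \<in> A d" using h dI by (auto simp: A_char)
  moreover have "T = g n \<beta> d (a,b,a+b)" using h kd knI by (simp add: g_def K_def k_def)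
  ultimately show "T \<in> (\<Union>d\<in>{d. d > 0 \<and> d dvd (n + \<beta>) \<and> \<beta> * d < n + \<beta>}. g n \<beta> d ` A d)"
    using dD by blast
next
  fix T assume "T \<in> (\<Union>d\<in>{d. d > 0 \<and> d dvd (n + \<beta>) \<and> \<beta> * d < n + \<beta>}. g n \<beta> d ` A d)"
  then obtain d T0 where d: "d > 0" "d dvd (n + \<beta>)" "\<beta> * d < n + \<beta>" and T0: "T0 \<in> A d" "T = g n \<beta> d T0" by blast
  from T0(1) obtain a b where h: "T0 = (a,b,a+b)" "0<a" "a\<le>b" "coprime a b" "a+b = int d" by (auto simp: A_char)
  define kn where "kn = (n+\<beta>) div d"
  have prod: "kn * d = n + \<beta>" using d(2) by (simp add: kn_def)
  have "\<beta> * d < kn * d" using prod d(3) by simp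
  then have bk: "\<beta> < kn" by simp
  define k where "k = int kn"
  have "(k*a - int \<beta>, k*b - int \<beta>, k*(a+b) - int \<beta>) \<in> euclid_tree (k - int \<beta>) (int \<beta>)"
    by (rule tree_sup[OF h(2-4)])
  moreover have "T = (k*a - int \<beta>, k*b - int \<beta>, k*(a+b) - int \<beta>)"
    using T0(2) h(1) by (simp add: g_def K_def k_def kn_def)
  moreover have "k - int \<beta> \<ge> 1" using bk by (simp add: k_def)
  moreover have "k*(a+b) - int \<beta> = int n"
  proof -
    have "k*(a+b) = int (kn*d)" using h(5) by (simp add: k_def)
    then show ?thesis using prod by simp
  qed
  moreover have "k > 0" using bk by (simp add: k_def)
  ultimately show "T \<in> {T. \<exists>\<alpha>::int. \<alpha> \<ge> 1 \<and> T \<in> euclid_tree \<alpha> (int \<beta>) \<and> maxT T = int n}"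
    using maxT_val[of k a b "int \<beta>"] h by auto
qed

lemma K_prod: "d dvd (n+\<beta>) \<Longrightarrow> K n \<beta> d * int d = int (n+\<beta>)"
  unfolding K_def by (metis dvd_mult_div_cancel mult.commute of_nat_mult)

lemma K_pos: "n > 0 \<Longrightarrow> d dvd (n+\<beta>) \<Longrightarrow> K n \<beta> d > 0"
  using K_prod[of d n \<beta>] unfolding K_def
  by (metis add_gr_0 dvd_div_eq_0_iff gr0I of_nat_0_less_iff zero_less_iff_neq_zero)

lemma g_inj: "n > 0 \<Longrightarrow> d dvd (n+\<beta>) \<Longrightarrow> inj_on (g n \<beta> d) X"
  using K_pos[of n d \<beta>] by (auto simp: inj_on_def g_def)

lemma g_disj:
  assumes n: "n > 0" and d: "d dvd (n+\<beta>)" and d': "d' dvd (n+\<beta>)" and ne: "d \<noteq> d'"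
  shows "g n \<beta> d ` A d \<inter> g n \<beta> d' ` A d' = {}"
proof (rule ccontr)
  assume "g n \<beta> d ` A d \<inter> g n \<beta> d' ` A d' \<noteq> {}"
  then obtain T T' where T: "T \<in> A d" "T' \<in> A d'" "g n \<beta> d T = g n \<beta> d' T'" by blast
  from T(1) obtain a b where h: "T = (a,b,a+b)" "coprime a b" "a+b = int d" by (auto simp: A_char)
  from T(2) obtain a' b' where h': "T' = (a',b',a'+b')" "coprime a' b'" "a'+b' = int d'" by (auto simp: A_char)
  define k where "k = K n \<beta> d"
  define k' where "k' = K n \<beta> d'"
  have kp: "k > 0" "k' > 0" using K_pos[OF n d] K_pos[OF n d'] by (auto simp: k_def k'_def)
  have e: "k*a = k'*a'" "k*b = k'*b'" using T(3) h h' by (auto simp: g_def k_def k'_def)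
  have "gcd (k*a) (k*b) = k" using gcd_mult_distrib_int[of k a b] h(2) kp by simp
  moreover have "gcd (k'*a') (k'*b') = k'" using gcd_mult_distrib_int[of k' a' b'] h'(2) kp by simp
  ultimately have "k = k'" using e by simp
  moreover have "k * int d = k' * int d'" using K_prod[OF d] K_prod[OF d'] by (simp add: k_def k'_def)
  ultimately have "int d = int d'" using kp by simp
  then show False using ne by simp
qed

lemma card_S:
  assumes n: "n > 0"
  shows "card {T. \<exists>\<alpha>::int. \<alpha> \<ge> 1 \<and> T \<in> euclid_tree \<alpha> (int \<beta>) \<and> maxT T = int n}
     = (\<Sum>d \<in> {d. d > 0 \<and> d dvd (n + \<beta>) \<and> \<beta> * d < n + \<beta>}. card (A d))"
proof -
  let ?D = "{d. d > 0 \<and> d dvd (n + \<beta>) \<and> \<beta> * d < n + \<beta>}"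
  have fD: "finite ?D" by (rule finite_subset[of _ "{..n+\<beta>}"]) (auto intro: dvd_imp_le simp: n)
  have "card (\<Union>d\<in>?D. g n \<beta> d ` A d) = (\<Sum>d\<in>?D. card (g n \<beta> d ` A d))"
    by (rule card_UN_disjoint) (use fD A_finite g_disj n in auto)
  also have "\<dots> = (\<Sum>d\<in>?D. card (A d))"
    by (rule sum.cong) (auto intro!: card_image g_inj n)
  finally show ?thesis using S_eq[OF n] by simp
qed

theorem lemma3p3:
  fixes \<beta> n :: nat
  assumes "n > 0"
  shows "C \<beta> n = (\<Sum>d \<in> {d. d > 0 \<and> d dvd (n + \<beta>) \<and> \<beta> * d < n + \<beta>}. E d)"
proof -
  let ?D = "{d. d > 0 \<and> d dvd (n + \<beta>) \<and> \<beta> * d < n + \<beta>}"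
  have fD: "finite ?D" by (rule finite_subset[of _ "{..n+\<beta>}"]) (auto intro: dvd_imp_le simp: assms)
  have one: "1 \<in> ?D" using assms by auto
  have "(\<Sum>d\<in>?D. E d) = E 1 + (\<Sum>d\<in>?D - {1}. E d)" by (rule sum.remove[OF fD one])
  also have "(\<Sum>d\<in>?D - {1}. E d) = (\<Sum>d\<in>?D - {1}. card (A d))"
    by (rule sum.cong) (auto simp: E_A)
  also have "\<dots> = (\<Sum>d\<in>?D. card (A d))"
    using sum.remove[OF fD one, of "\<lambda>d. card (A d)"] using A_one by simp
  finally show ?thesis using card_S[OF assms] by (simp add: C_def E_def)
qed

end
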